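(* In $(\lambda\beta\eta\pi* )'$, let $t$ be a term and $z^\top$ a variable of type $\top$ not occurring in $t$. Then (a) if $t$ is reducible, then $t[*^\top:=z^\top]$ is reducible; and (b) $t[*^\top:=z^\top]\stackrel{*}{\to} t$. In particular, if $t$ has atomic type and is SN, then $t[*^\top:=z^\top]$ is SN.
   Context: Types are built from a distinguished type constant $\top$ and type variables by means of $\varphi\times\psi$ and $\varphi\to\psi$; an atomic type is $\top$ or a type variable. Terms are simply typed (each variable carries its type): the term constant $*^\top$, variables $x^\varphi$, abstractions $(\lambda x^\varphi.t^\psi)^{\varphi\to\psi}$, applications $(u^{\varphi\to\psi}v^\varphi)^\psi$, pairs $\langle u^\varphi,v^\psi\rangle^{\varphi\times\psi}$, projections $(\pi_1 t^{\varphi\times\psi})^\varphi$, $(\pi_2 t^{\varphi\times\psi})^\psi$. Terms are identified up to renaming of bound variables, written $\equiv$; $\mathrm{FV}(t)$ is the set of free variables. The set $\mathit{Iso}(\top)$ is the least set of types containing $\top$, containing $\varphi\to\tau$ whenever $\tau\in\mathit{Iso}(\top)$ ($\varphi$ arbitrary), and containing $\tau_1\times\tau_2$ whenever $\tau_1,\tau_2\in\mathit{Iso}(\top)$. For $\tau\in\mathit{Iso}(\top)$ the canonical term $*^\tau$ is: $*^\top$ the constant; $*^{\varphi\to\tau}:=\lambda x^\varphi.*^\tau$; $*^{\tau_1\times\tau_2}:=\langle *^{\tau_1},*^{\tau_2}\rangle$ (writing $*^\varphi$ presupposes $\varphi\in\mathit{Iso}(\top)$). The one-step rewrite relation $\to$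 of $(\lambda\beta\eta\pi* )'$ is the closure under arbitrary term contexts of: $(\beta)$ $(\lambda x.u)v\to u[x:=v]$; $(\pi_1)$ $\pi_1\langle u,v\rangle\to u$; $(\pi_2)$ $\pi_2\langle u,v\rangle\to v$; $(\eta)$ $\lambda x.tx\to t$ if $x\notin\mathrm{FV}(t)$; $(SP)$ $\langle\pi_1u,\pi_2u\rangle\to u$; (gentop) $u^\tau\to *^\tau$ if $\tau\in\mathit{Iso}(\top)$ and $u\not\equiv *^\tau$; $(\eta_{top})$ $\lambda x^\tau.t\,*^\tau\to t$ if $\tau\in\mathit{Iso}(\top)$, $x\notin\mathrm{FV}(t)$; $(SP_{top}1)$ $\langle\pi_1u,*^\tau\rangle\to u$ for $u$ of type $\varphi\times\tau$, $\tau\in\mathit{Iso}(\top)$; $(SP_{top}2)$ $\langle *^\tau,\pi_2u\rangle\to u$ for $u$ of type $\tau\times\psi$, $\tau\in\mathit{Iso}(\top)$. $\stackrel{*}{\to}$ is the reflexive transitive closure. A term is SN if there is no infinite $\to$-sequence starting from it. For a term $t$ and a variable $z^\top$, $t[*^\top:=z^\top]$ denotes the term obtained by replacing every occurrence of the constant $*^\top$ in $t$ by $z^\top$. Reducibility is defined by induction on types: a term of atomic type is reducible iff it is SN; a term $t$ of type $\varphi\times\psi$ is reducible iff $\pi_1t$ and $\pi_2t$ are reducible; a term $t$ of type $\varphi\to\psi$ is reducible iff $tu$ is reducible for every reducible term $u$ of type $\varphi$. *)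

theory Defs
  imports Main
begin

datatype ty = Top | TVar nat | Prod ty ty | Arr ty ty

fun atomic :: "ty \<Rightarrow> bool" where
  "atomic Top = True"
| "atomic (TVar _) = True"
| "atomic _ = False"

(* Var i \<tau> : an occurrence of a variable of type \<tau>; at binder depth d,
   if i < d it is bound by the i-th enclosing binder, otherwise it denotes
   the free variable with name (i - d) and type \<tau>. *)
datatype trm = Star | Var nat ty | Lam ty trm | App trm trm | Pair trm trm
  | P1 trm | P2 trm

(* typing; \<Gamma> lists types of enclosing binders, innermost first *)
inductive has_ty :: "ty list \<Rightarrow> trm \<Rightarrow> ty \<Rightarrow> bool" where
  typ_star: "has_ty \<Gamma> Star Top"
| typ_bvar: "i < length \<Gamma> \<Longrightarrow> \<Gamma> ! i = \<tau> \<Longrightarrow> has_ty \<Gamma> (Var i \<tau>) \<tau>"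
| typ_fvar: "length \<Gamma> \<le> i \<Longrightarrow> has_ty \<Gamma> (Var i \<tau>) \<tau>"
| typ_lam: "has_ty (\<sigma> # \<Gamma>) t \<tau> \<Longrightarrow> has_ty \<Gamma> (Lam \<sigma> t) (Arr \<sigma> \<tau>)"
| typ_app: "has_ty \<Gamma> u (Arr \<phi> \<psi>) \<Longrightarrow> has_ty \<Gamma> v \<phi> \<Longrightarrow> has_ty \<Gamma> (App u v) \<psi>"
| typ_pair: "has_ty \<Gamma> u \<phi> \<Longrightarrow> has_ty \<Gamma> v \<psi> \<Longrightarrow> has_ty \<Gamma> (Pair u v) (Prod \<phi> \<psi>)"
| typ_p1: "has_ty \<Gamma> t (Prod \<phi> \<psi>) \<Longrightarrow> has_ty \<Gamma> (P1 t) \<phi>"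
| typ_p2: "has_ty \<Gamma> t (Prod \<phi> \<psi>) \<Longrightarrow> has_ty \<Gamma> (P2 t) \<psi>"

inductive iso_top :: "ty \<Rightarrow> bool" where
  "iso_top Top"
| "iso_top \<tau> \<Longrightarrow> iso_top (Arr \<phi> \<tau>)"
| "iso_top \<tau>1 \<Longrightarrow> iso_top \<tau>2 \<Longrightarrow> iso_top (Prod \<tau>1 \<tau>2)"

(* canonical term *^\<tau> (only meaningful for \<tau> in Iso(Top)) *)
fun canon :: "ty \<Rightarrow> trm" where
  "canon Top = Star"
| "canon (Arr \<phi> \<tau>) = Lam \<phi> (canon \<tau>)"
| "canon (Prod \<tau>1 \<tau>2) = Pair (canon \<tau>1) (canon \<tau>2)"
| "canon (TVar n) = Star"

fun lift :: "nat \<Rightarrow> trm \<Rightarrow> trm" where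
  "lift k Star = Star"
| "lift k (Var i \<tau>) = (if i < k then Var i \<tau> else Var (Suc i) \<tau>)"
| "lift k (Lam \<sigma> t) = Lam \<sigma> (lift (Suc k) t)"
| "lift k (App u v) = App (lift k u) (lift k v)"
| "lift k (Pair u v) = Pair (lift k u) (lift k v)"
| "lift k (P1 t) = P1 (lift k t)"
| "lift k (P2 t) = P2 (lift k t)"

fun subst :: "trm \<Rightarrow> nat \<Rightarrow> trm \<Rightarrow> trm" where
  "subst Star k v = Star"
| "subst (Var i \<tau>) k v = (if i < k then Var i \<tau> else if i = k then v else Var (i - 1) \<tau>)"
| "subst (Lam \<sigma> t) k v = Lam \<sigma> (subst t (Suc k) (lift 0 v))"
| "subst (App a b) k v = App (subst a k v) (subst b k v)"
| "subst (Pair a b) k v = Pair (subst a k v) (subst b k v)"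
| "subst (P1 t) k v = P1 (subst t k v)"
| "subst (P2 t) k v = P2 (subst t k v)"

fun loose :: "nat \<Rightarrow> trm \<Rightarrow> bool" where
  "loose k Star = False"
| "loose k (Var i \<tau>) = (i = k)"
| "loose k (Lam \<sigma> t) = loose (Suc k) t"
| "loose k (App u v) = (loose k u \<or> loose k v)"
| "loose k (Pair u v) = (loose k u \<or> loose k v)"
| "loose k (P1 t) = loose k t"
| "loose k (P2 t) = loose k t"

(* inverse of lift, for terms where k is not loose *)
fun unlift :: "nat \<Rightarrow> trm \<Rightarrow> trm" where
  "unlift k Star = Star"
| "unlift k (Var i \<tau>) = (if i < k then Var i \<tau> else Var (i - 1) \<tau>)"
| "unlift k (Lam \<sigma> t) = Lam \<sigma> (unlift (Suc k) t)"
| "unlift k (App u v) = App (unlift k u) (unlift k v)"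
| "unlift k (Pair u v) = Pair (unlift k u) (unlift k v)"
| "unlift k (P1 t) = P1 (unlift k t)"
| "unlift k (P2 t) = P2 (unlift k t)"

fun free_occ :: "nat \<Rightarrow> ty \<Rightarrow> nat \<Rightarrow> trm \<Rightarrow> bool" where
  "free_occ z \<tau> d Star = False"
| "free_occ z \<tau> d (Var i \<sigma>) = (d \<le> i \<and> i - d = z \<and> \<sigma> = \<tau>)"
| "free_occ z \<tau> d (Lam \<sigma> t) = free_occ z \<tau> (Suc d) t"
| "free_occ z \<tau> d (App u v) = (free_occ z \<tau> d u \<or> free_occ z \<tau> d v)"
| "free_occ z \<tau> d (Pair u v) = (free_occ z \<tau> d u \<or> free_occ z \<tau> d v)"
| "free_occ z \<tau> d (P1 t) = free_occ z \<tau> d t"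
| "free_occ z \<tau> d (P2 t) = free_occ z \<tau> d t"

(* t[*^Top := z^Top], t at binder depth d *)
fun repl_star :: "nat \<Rightarrow> nat \<Rightarrow> trm \<Rightarrow> trm" where
  "repl_star z d Star = Var (z + d) Top"
| "repl_star z d (Var i \<sigma>) = Var i \<sigma>"
| "repl_star z d (Lam \<sigma> t) = Lam \<sigma> (repl_star z (Suc d) t)"
| "repl_star z d (App u v) = App (repl_star z d u) (repl_star z d v)"
| "repl_star z d (Pair u v) = Pair (repl_star z d u) (repl_star z d v)"
| "repl_star z d (P1 t) = P1 (repl_star z d t)"
| "repl_star z d (P2 t) = P2 (repl_star z d t)"

(* one-step rewriting of (\<lambda>\<beta>\<eta>\<pi>* )', closed under contexts;
   \<Gamma> = types of the binders above the redex *)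
inductive step :: "ty list \<Rightarrow> trm \<Rightarrow> trm \<Rightarrow> bool" where
  beta: "step \<Gamma> (App (Lam \<sigma> u) v) (subst u 0 v)"
| pi1: "step \<Gamma> (P1 (Pair u v)) u"
| pi2: "step \<Gamma> (P2 (Pair u v)) v"
| eta: "\<not> loose 0 t \<Longrightarrow> step \<Gamma> (Lam \<sigma> (App t (Var 0 \<sigma>))) (unlift 0 t)"
| sp: "step \<Gamma> (Pair (P1 u) (P2 u)) u"
| gentop: "has_ty \<Gamma> u \<tau> \<Longrightarrow> iso_top \<tau> \<Longrightarrow> u \<noteq> canon \<tau> \<Longrightarrow> step \<Gamma> u (canon \<tau>)"
| eta_top: "iso_top \<tau> \<Longrightarrow> \<not> loose 0 t \<Longrightarrow>
            step \<Gamma> (Lam \<tau> (App t (canon \<tau>))) (unlift 0 t)"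
| sp_top1: "has_ty \<Gamma> u (Prod \<phi> \<tau>) \<Longrightarrow> iso_top \<tau> \<Longrightarrow> step \<Gamma> (Pair (P1 u) (canon \<tau>)) u"
| sp_top2: "has_ty \<Gamma> u (Prod \<tau> \<psi>) \<Longrightarrow> iso_top \<tau> \<Longrightarrow> step \<Gamma> (Pair (canon \<tau>) (P2 u)) u"
| ctx_lam: "step (\<sigma> # \<Gamma>) t t' \<Longrightarrow> step \<Gamma> (Lam \<sigma> t) (Lam \<sigma> t')"
| ctx_app1: "step \<Gamma> u u' \<Longrightarrow> step \<Gamma> (App u v) (App u' v)"
| ctx_app2: "step \<Gamma> v v' \<Longrightarrow> step \<Gamma> (App u v) (App u v')"
| ctx_pair1: "step \<Gamma> u u' \<Longrightarrow> step \<Gamma> (Pair u v) (Pair u' v)"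
| ctx_pair2: "step \<Gamma> v v' \<Longrightarrow> step \<Gamma> (Pair u v) (Pair u v')"
| ctx_p1: "step \<Gamma> t t' \<Longrightarrow> step \<Gamma> (P1 t) (P1 t')"
| ctx_p2: "step \<Gamma> t t' \<Longrightarrow> step \<Gamma> (P2 t) (P2 t')"

abbreviation red1 :: "trm \<Rightarrow> trm \<Rightarrow> bool" where
  "red1 \<equiv> step []"

abbreviation reds :: "trm \<Rightarrow> trm \<Rightarrow> bool" where
  "reds \<equiv> red1\<^sup>*\<^sup>*"

definition SN :: "trm \<Rightarrow> bool" where
  "SN t \<longleftrightarrow> \<not> (\<exists>f. f 0 = t \<and> (\<forall>n. red1 (f n) (f (Suc n))))"

fun reducible :: "ty \<Rightarrow> trm \<Rightarrow> bool" where
  "reducible Top t = SN t"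
| "reducible (TVar n) t = SN t"
| "reducible (Prod \<phi> \<psi>) t = (reducible \<phi> (P1 t) \<and> reducible \<psi> (P2 t))"
| "reducible (Arr \<phi> \<psi>) t = (\<forall>u. has_ty [] u \<phi> \<longrightarrow> reducible \<phi> u \<longrightarrow> reducible \<psi> (App t u))"

end

theory Submission
  imports Defs
begin

inductive rel :: "nat \<Rightarrow> nat \<Rightarrow> trm \<Rightarrow> trm \<Rightarrow> bool" for z where
  r_z: "rel z d (Var (z + d) Top) Star"
| r_star: "rel z d Star Star"
| r_var: "rel z d (Var i \<sigma>) (Var i \<sigma>)"
| r_lam: "rel z (Suc d) a b \<Longrightarrow> rel z d (Lam \<sigma> a) (Lam \<sigma> b)"
| r_app: "rel z d a b \<Longrightarrow> rel z d a' b' \<Longrightarrow> rel z d (App a a') (App b b')"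
| r_pair: "rel z d a b \<Longrightarrow> rel z d a' b' \<Longrightarrow> rel z d (Pair a a') (Pair b b')"
| r_p1: "rel z d a b \<Longrightarrow> rel z d (P1 a) (P1 b)"
| r_p2: "rel z d a b \<Longrightarrow> rel z d (P2 a) (P2 b)"

lemma r_z': "i = z + d \<Longrightarrow> rel z d (Var i Top) Star"
  using r_z by simp

lemma rel_Star[simp]: "rel z d Star s \<longleftrightarrow> s = Star"
  by (auto elim: rel.cases intro: rel.intros)
lemma rel_Var[simp]: "rel z d (Var i \<sigma>) s \<longleftrightarrow> s = Var i \<sigma> \<or> (i = z + d \<and> \<sigma> = Top \<and> s = Star)"
  by (auto elim: rel.cases intro: rel.intros)
lemma rel_Lam[simp]: "rel z d (Lam \<sigma> a) s \<longleftrightarrow> (\<exists>b. s = Lam \<sigma> b \<and> rel z (Suc d) a b)"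
  by (auto elim: rel.cases intro: rel.intros)
lemma rel_App[simp]: "rel z d (App a a') s \<longleftrightarrow> (\<exists>b b'. s = App b b' \<and> rel z d a b \<and> rel z d a' b')"
  by (auto elim: rel.cases intro: rel.intros)
lemma rel_Pair[simp]: "rel z d (Pair a a') s \<longleftrightarrow> (\<exists>b b'. s = Pair b b' \<and> rel z d a b \<and> rel z d a' b')"
  by (auto elim: rel.cases intro: rel.intros)
lemma rel_P1[simp]: "rel z d (P1 a) s \<longleftrightarrow> (\<exists>b. s = P1 b \<and> rel z d a b)"
  by (auto elim: rel.cases intro: rel.intros)
lemma rel_P2[simp]: "rel z d (P2 a) s \<longleftrightarrow> (\<exists>b. s = P2 b \<and> rel z d a b)"
  by (auto elim: rel.cases intro: rel.intros)

lemma rel_refl: "rel z d x x"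
  by (induction x arbitrary: d) (auto intro: rel.intros)

lemma rel_repl: "rel z d (repl_star z d t) t"
  by (induction t arbitrary: d) (auto intro: rel.intros)

fun zc :: "nat \<Rightarrow> nat \<Rightarrow> trm \<Rightarrow> nat" where
  "zc z d Star = 0"
| "zc z d (Var i \<sigma>) = (if i = z + d \<and> \<sigma> = Top then 1 else 0)"
| "zc z d (Lam \<sigma> t) = zc z (Suc d) t"
| "zc z d (App u v) = zc z d u + zc z d v"
| "zc z d (Pair u v) = zc z d u + zc z d v"
| "zc z d (P1 t) = zc z d t"
| "zc z d (P2 t) = zc z d t"

lemma zc0: "rel z d a b \<Longrightarrow> zc z d a = 0 \<Longrightarrow> a = b"
  by (induction rule: rel.induct) auto

lemma zc_canon: "zc z d (canon \<tau>) = 0"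
  by (induction \<tau> arbitrary: d) auto

lemma canon_rel: "rel z d (canon \<tau>) c \<Longrightarrow> c = canon \<tau>"
  by (induction \<tau> arbitrary: d c) auto

lemma lift_rel: "rel z d a b \<Longrightarrow> k \<le> d \<Longrightarrow> rel z (Suc d) (lift k a) (lift k b)"
  by (induction arbitrary: k rule: rel.induct) (auto intro: rel.intros)

lemma subst_rel: "rel z D a a' \<Longrightarrow> D = Suc d \<Longrightarrow> rel z d v v' \<Longrightarrow> k \<le> d
   \<Longrightarrow> rel z d (subst a k v) (subst a' k v')"
proof (induction arbitrary: d k v v' rule: rel.induct)
  case (r_lam d a b \<sigma>)
  then show ?case using lift_rel[of z d v v' 0] by auto
qed (auto intro: rel.intros rel_refl)

lemma unlift_rel: "rel z D a a' \<Longrightarrow> D = Suc d \<Longrightarrow> k \<le> d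
   \<Longrightarrow> rel z d (unlift k a) (unlift k a')"
  by (induction arbitrary: d k rule: rel.induct) (auto intro: rel.intros)

lemma loose_rel: "rel z d a b \<Longrightarrow> loose k b \<Longrightarrow> loose k a"
  by (induction arbitrary: k rule: rel.induct) auto

lemma has_ty_rel: "has_ty \<Gamma> a \<tau> \<Longrightarrow> rel z (length \<Gamma>) a b \<Longrightarrow> has_ty \<Gamma> b \<tau>"
  by (induction arbitrary: b rule: has_ty.induct) (auto intro: has_ty.intros)

fun unrepl :: "nat \<Rightarrow> nat \<Rightarrow> trm \<Rightarrow> trm" where
  "unrepl z d Star = Star"
| "unrepl z d (Var i \<sigma>) = (if i = z + d \<and> \<sigma> = Top then Star else Var i \<sigma>)"
| "unrepl z d (Lam \<sigma> t) = Lam \<sigma> (unrepl z (Suc d) t)"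
| "unrepl z d (App u v) = App (unrepl z d u) (unrepl z d v)"
| "unrepl z d (Pair u v) = Pair (unrepl z d u) (unrepl z d v)"
| "unrepl z d (P1 t) = P1 (unrepl z d t)"
| "unrepl z d (P2 t) = P2 (unrepl z d t)"

lemma rel_unrepl: "rel z d w (unrepl z d w)"
  by (induction w arbitrary: d) (auto intro: rel.intros)

lemma rel_unrepl2: "rel z d w w1 \<Longrightarrow> rel z d w1 (unrepl z d w)"
  by (induction rule: rel.induct) (auto intro: rel.intros)

lemma rtranclp_map: assumes h: "\<And>x y. R x y \<Longrightarrow> S (f x) (f y)" and r: "R\<^sup>*\<^sup>* a b" shows "S\<^sup>*\<^sup>* (f a) (f b)"
  using r by (induction rule: rtranclp_induct) (use h in \<open>auto intro: rtranclp.rtrancl_into_rtrancl\<close>)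

lemma tranclp_map: assumes h: "\<And>x y. R x y \<Longrightarrow> S (f x) (f y)" and r: "R\<^sup>+\<^sup>+ a b" shows "S\<^sup>+\<^sup>+ (f a) (f b)"
  using r by (induction rule: tranclp_induct) (use h in \<open>auto intro: tranclp.trancl_into_trancl\<close>)

lemma rel_reds: "rel z d a b \<Longrightarrow> length \<Gamma> = d \<Longrightarrow> (step \<Gamma>)\<^sup>*\<^sup>* a b"
proof (induction arbitrary: \<Gamma> rule: rel.induct)
  case (r_z d)
  have "step \<Gamma> (Var (z + d) Top) (canon Top)"
    by (rule gentop) (use r_z in \<open>auto intro: has_ty.intros iso_top.intros\<close>)
  then show ?case by auto
next
  case (r_lam d a b \<sigma>)
  have "(step (\<sigma> # \<Gamma>))\<^sup>*\<^sup>* a b" using r_lam by auto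
  then show ?case by (rule rtranclp_map[where f="Lam \<sigma>", rotated]) (rule ctx_lam)
next
  case (r_app d a b a' b')
  have "(step \<Gamma>)\<^sup>*\<^sup>* (App a a') (App b a')"
    using r_app by (auto intro: rtranclp_map[where f="\<lambda>x. App x a'"] ctx_app1)
  moreover have "(step \<Gamma>)\<^sup>*\<^sup>* (App b a') (App b b')"
    using r_app by (auto intro: rtranclp_map[where f="\<lambda>x. App b x"] ctx_app2)
  ultimately show ?case by simp
next
  case (r_pair d a b a' b')
  have "(step \<Gamma>)\<^sup>*\<^sup>* (Pair a a') (Pair b a')"
    using r_pair by (auto intro: rtranclp_map[where f="\<lambda>x. Pair x a'"] ctx_pair1)
  moreover have "(step \<Gamma>)\<^sup>*\<^sup>* (Pair b a') (Pair b b')"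
    using r_pair by (auto intro: rtranclp_map[where f="\<lambda>x. Pair b x"] ctx_pair2)
  ultimately show ?case by simp
next
  case (r_p1 d a b)
  then show ?case by (auto intro: rtranclp_map[where f="P1"] ctx_p1)
next
  case (r_p2 d a b)
  then show ?case by (auto intro: rtranclp_map[where f="P2"] ctx_p2)
qed auto


abbreviation P :: "nat \<Rightarrow> ty list \<Rightarrow> trm \<Rightarrow> trm \<Rightarrow> trm \<Rightarrow> trm \<Rightarrow> bool" where
  "P z \<Gamma> s s' r r' \<equiv> rel z (length \<Gamma>) r' r \<and>
     ((step \<Gamma>)\<^sup>+\<^sup>+ s r \<or> (r = s \<and> zc z (length \<Gamma>) r' < zc z (length \<Gamma>) s'))"

lemma sim: "step \<Gamma> s' r' \<Longrightarrow> rel z (length \<Gamma>) s' s \<Longrightarrow> \<exists>r. P z \<Gamma> s s' r r'"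
proof (induction arbitrary: s rule: step.induct)
  case (beta \<Gamma> \<sigma> u v)
  then obtain u0 v0 where s: "s = App (Lam \<sigma> u0) v0" and h: "rel z (Suc (length \<Gamma>)) u u0"
    "rel z (length \<Gamma>) v v0" by auto
  have "rel z (length \<Gamma>) (subst u 0 v) (subst u0 0 v0)"
    using subst_rel[OF h(1) refl h(2)] by simp
  moreover have "step \<Gamma> s (subst u0 0 v0)" unfolding s by (rule step.beta)
  ultimately show ?case by blast
next
  case (pi1 \<Gamma> u v)
  then show ?case by (auto intro: step.pi1)
next
  case (pi2 \<Gamma> u v)
  then show ?case by (auto intro: step.pi2)
next
  case (eta t \<Gamma> \<sigma>)
  then obtain a where s: "s = Lam \<sigma> (App a (Var 0 \<sigma>))" and h: "rel z (Suc (length \<Gamma>)) t a"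
    by auto
  have "\<not> loose 0 a" using eta loose_rel[OF h] by blast
  then have "step \<Gamma> s (unlift 0 a)" unfolding s by (rule step.eta)
  moreover have "rel z (length \<Gamma>) (unlift 0 t) (unlift 0 a)" using unlift_rel[OF h refl] by simp
  ultimately show ?case by blast
next
  case (sp \<Gamma> u)
  then obtain w1 w2 where s: "s = Pair (P1 w1) (P2 w2)" and h: "rel z (length \<Gamma>) u w1"
    "rel z (length \<Gamma>) u w2" by auto
  let ?m = "unrepl z (length \<Gamma>) u"
  have r1: "(step \<Gamma>)\<^sup>*\<^sup>* w1 ?m" using rel_reds[OF rel_unrepl2[OF h(1)]] by simp
  have r2: "(step \<Gamma>)\<^sup>*\<^sup>* w2 ?m" using rel_reds[OF rel_unrepl2[OF h(2)]] by simp
  have "(step \<Gamma>)\<^sup>*\<^sup>* s (Pair (P1 ?m) (P2 w2))"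
    unfolding s by (rule rtranclp_map[OF _ r1, where f="\<lambda>x. Pair (P1 x) (P2 w2)"])
       (auto intro: ctx_pair1 ctx_p1)
  also have "(step \<Gamma>)\<^sup>*\<^sup>* (Pair (P1 ?m) (P2 w2)) (Pair (P1 ?m) (P2 ?m))"
    by (rule rtranclp_map[OF _ r2, where f="\<lambda>x. Pair (P1 ?m) (P2 x)"])
       (auto intro: ctx_pair2 ctx_p2)
  finally have "(step \<Gamma>)\<^sup>+\<^sup>+ s ?m" using step.sp[of \<Gamma> ?m]
    by (simp add: rtranclp_into_tranclp1)
  moreover have "rel z (length \<Gamma>) u ?m" by (rule rel_unrepl)
  ultimately show ?case by blast
next
  case (gentop \<Gamma> u \<tau>)
  have ty: "has_ty \<Gamma> s \<tau>" by (rule has_ty_rel[OF gentop(1,4)])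
  show ?case
  proof (cases "s = canon \<tau>")
    case True
    have "zc z (length \<Gamma>) u \<noteq> 0" using zc0[OF gentop(4)] True gentop(3) by auto
    then show ?thesis using True zc_canon[of z "length \<Gamma>" \<tau>] rel_refl by auto
  next
    case False
    then have "step \<Gamma> s (canon \<tau>)" using ty gentop(2) by (rule_tac step.gentop) auto
    then show ?thesis using rel_refl by blast
  qed
next
  case (eta_top \<tau> t \<Gamma>)
  then obtain a c where s: "s = Lam \<tau> (App a c)" and h: "rel z (Suc (length \<Gamma>)) t a"
    and hc: "rel z (Suc (length \<Gamma>)) (canon \<tau>) c"
    by auto
  have c: "c = canon \<tau>" using canon_rel[OF hc] .
  have "\<not> loose 0 a" using eta_top loose_rel[OF h] by blast
  then have "step \<Gamma> s (unlift 0 a)" unfolding s c by (rule step.eta_top[OF eta_top(1)])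
  moreover have "rel z (length \<Gamma>) (unlift 0 t) (unlift 0 a)" using unlift_rel[OF h refl] by simp
  ultimately show ?case by blast
next
  case (sp_top1 \<Gamma> u \<phi> \<tau>)
  then obtain a c where s: "s = Pair (P1 a) c" and h: "rel z (length \<Gamma>) u a"
    and hc: "rel z (length \<Gamma>) (canon \<tau>) c" by auto
  have c: "c = canon \<tau>" using canon_rel[OF hc] .
  have "has_ty \<Gamma> a (Prod \<phi> \<tau>)" using has_ty_rel[OF sp_top1(1) h] .
  then have "step \<Gamma> s a" unfolding s c by (rule step.sp_top1[OF _ sp_top1(2)])
  then show ?case using h by blast
next
  case (sp_top2 \<Gamma> u \<tau> \<psi>)
  then obtain a c where s: "s = Pair c (P2 a)" and h: "rel z (length \<Gamma>) u a"
    and hc: "rel z (length \<Gamma>) (canon \<tau>) c" by auto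
  have c: "c = canon \<tau>" using canon_rel[OF hc] .
  have "has_ty \<Gamma> a (Prod \<tau> \<psi>)" using has_ty_rel[OF sp_top2(1) h] .
  then have "step \<Gamma> s a" unfolding s c by (rule step.sp_top2[OF _ sp_top2(2)])
  then show ?case using h by blast
next
  case (ctx_lam \<sigma> \<Gamma> t t')
  then obtain a where s: "s = Lam \<sigma> a" and h: "rel z (Suc (length \<Gamma>)) t a" by auto
  obtain r where r: "P z (\<sigma> # \<Gamma>) a t r t'" using ctx_lam.IH h by auto
  have "(step (\<sigma> # \<Gamma>))\<^sup>+\<^sup>+ a r \<Longrightarrow> (step \<Gamma>)\<^sup>+\<^sup>+ s (Lam \<sigma> r)"
    unfolding s by (erule tranclp_map[rotated]) (rule step.ctx_lam)
  then have "P z \<Gamma> s (Lam \<sigma> t) (Lam \<sigma> r) (Lam \<sigma> t')" using r s by auto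
  then show ?case by blast
next
  case (ctx_app1 \<Gamma> u u' v)
  then obtain a b where s: "s = App a b" and h: "rel z (length \<Gamma>) u a" "rel z (length \<Gamma>) v b" by auto
  obtain r where r: "P z \<Gamma> a u r u'" using ctx_app1.IH h by auto
  have "(step \<Gamma>)\<^sup>+\<^sup>+ a r \<Longrightarrow> (step \<Gamma>)\<^sup>+\<^sup>+ s (App r b)"
    unfolding s by (erule tranclp_map[rotated]) (rule step.ctx_app1)
  then have "P z \<Gamma> s (App u v) (App r b) (App u' v)" using r s h by auto
  then show ?case by blast
next
  case (ctx_app2 \<Gamma> v v' u)
  then obtain a b where s: "s = App a b" and h: "rel z (length \<Gamma>) u a" "rel z (length \<Gamma>) v b" by auto
  obtain r where r: "P z \<Gamma> b v r v'" using ctx_app2.IH h by auto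
  have "(step \<Gamma>)\<^sup>+\<^sup>+ b r \<Longrightarrow> (step \<Gamma>)\<^sup>+\<^sup>+ s (App a r)"
    unfolding s by (erule tranclp_map[rotated]) (rule step.ctx_app2)
  then have "P z \<Gamma> s (App u v) (App a r) (App u v')" using r s h by auto
  then show ?case by blast
next
  case (ctx_pair1 \<Gamma> u u' v)
  then obtain a b where s: "s = Pair a b" and h: "rel z (length \<Gamma>) u a" "rel z (length \<Gamma>) v b" by auto
  obtain r where r: "P z \<Gamma> a u r u'" using ctx_pair1.IH h by auto
  have "(step \<Gamma>)\<^sup>+\<^sup>+ a r \<Longrightarrow> (step \<Gamma>)\<^sup>+\<^sup>+ s (Pair r b)"
    unfolding s by (erule tranclp_map[rotated]) (rule step.ctx_pair1)
  then have "P z \<Gamma> s (Pair u v) (Pair r b) (Pair u' v)" using r s h by auto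
  then show ?case by blast
next
  case (ctx_pair2 \<Gamma> v v' u)
  then obtain a b where s: "s = Pair a b" and h: "rel z (length \<Gamma>) u a" "rel z (length \<Gamma>) v b" by auto
  obtain r where r: "P z \<Gamma> b v r v'" using ctx_pair2.IH h by auto
  have "(step \<Gamma>)\<^sup>+\<^sup>+ b r \<Longrightarrow> (step \<Gamma>)\<^sup>+\<^sup>+ s (Pair a r)"
    unfolding s by (erule tranclp_map[rotated]) (rule step.ctx_pair2)
  then have "P z \<Gamma> s (Pair u v) (Pair a r) (Pair u v')" using r s h by auto
  then show ?case by blast
next
  case (ctx_p1 \<Gamma> t t')
  then obtain a where s: "s = P1 a" and h: "rel z (length \<Gamma>) t a" by auto
  obtain r where r: "P z \<Gamma> a t r t'" using ctx_p1.IH h by auto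
  have "(step \<Gamma>)\<^sup>+\<^sup>+ a r \<Longrightarrow> (step \<Gamma>)\<^sup>+\<^sup>+ s (P1 r)"
    unfolding s by (erule tranclp_map[rotated]) (rule step.ctx_p1)
  then have "P z \<Gamma> s (P1 t) (P1 r) (P1 t')" using r s by auto
  then show ?case by blast
next
  case (ctx_p2 \<Gamma> t t')
  then obtain a where s: "s = P2 a" and h: "rel z (length \<Gamma>) t a" by auto
  obtain r where r: "P z \<Gamma> a t r t'" using ctx_p2.IH h by auto
  have "(step \<Gamma>)\<^sup>+\<^sup>+ a r \<Longrightarrow> (step \<Gamma>)\<^sup>+\<^sup>+ s (P2 r)"
    unfolding s by (erule tranclp_map[rotated]) (rule step.ctx_p2)
  then have "P z \<Gamma> s (P2 t) (P2 r) (P2 t')" using r s by auto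
  then show ?case by blast
qed


lemma acc_trancl: assumes a: "Wellfounded.accp (\<lambda>y x. R x y) a" shows "Wellfounded.accp (\<lambda>y x. R\<^sup>+\<^sup>+ x y) a"
  using a
proof (induction rule: accp_induct_rule)
  case (1 x)
  show ?case
  proof (rule accpI)
    fix y assume "R\<^sup>+\<^sup>+ x y"
    then obtain w where w: "R x w" "R\<^sup>*\<^sup>* w y" using tranclpD by metis
    have aw: "Wellfounded.accp (\<lambda>y x. R\<^sup>+\<^sup>+ x y) w" using 1 w(1) by blast
    from rtranclpD[OF w(2)] show "Wellfounded.accp (\<lambda>y x. R\<^sup>+\<^sup>+ x y) y"
    proof
      assume "w = y" then show ?thesis using aw by simp
    next
      assume "w \<noteq> y \<and> R\<^sup>+\<^sup>+ w y"
      then show ?thesis using accp_downward[OF aw, of y] by simp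
    qed
  qed
qed

lemma SN_accp: "SN t \<longleftrightarrow> Wellfounded.accp (\<lambda>y x. red1 x y) t"
proof
  assume a: "Wellfounded.accp (\<lambda>y x. red1 x y) t"
  have "\<forall>f. f 0 = t \<longrightarrow> \<not> (\<forall>n. red1 (f n) (f (Suc n)))"
    using a
  proof (induction rule: accp_induct_rule)
    case (1 x)
    show ?case
    proof (intro allI impI notI)
      fix f assume f0: "f 0 = x" and ch: "\<forall>n. red1 (f n) (f (Suc n))"
      have "red1 x (f 1)" using ch f0 by (metis One_nat_def)
      then have "\<forall>g. g 0 = f 1 \<longrightarrow> \<not> (\<forall>n. red1 (g n) (g (Suc n)))" using 1 by blast
      from this[rule_format, of "\<lambda>n. f (Suc n)"] show False using ch by simp
    qed
  qed
  then show "SN t" unfolding SN_def by blast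
next
  assume s: "SN t"
  show "Wellfounded.accp (\<lambda>y x. red1 x y) t"
  proof (rule ccontr)
    assume na: "\<not> Wellfounded.accp (\<lambda>y x. red1 x y) t"
    define nx where "nx x = (SOME y. red1 x y \<and> \<not> Wellfounded.accp (\<lambda>y x. red1 x y) y)" for x
    have nxp: "red1 x (nx x) \<and> \<not> Wellfounded.accp (\<lambda>y x. red1 x y) (nx x)"
      if nax: "\<not> Wellfounded.accp (\<lambda>y x. red1 x y) x" for x
    proof -
      obtain y where "red1 x y" "\<not> Wellfounded.accp (\<lambda>y x. red1 x y) y"
        using not_accp_down[OF nax] by blast
      then show ?thesis unfolding nx_def
        using someI[of "\<lambda>y. red1 x y \<and> \<not> Wellfounded.accp (\<lambda>y x. red1 x y) y" y] by blast
    qed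
    define f where "f n = (nx ^^ n) t" for n
    have "\<not> Wellfounded.accp (\<lambda>y x. red1 x y) (f n)" for n
      by (induction n) (auto simp: f_def na dest: nxp)
    then have "\<forall>n. red1 (f n) (f (Suc n))" using nxp by (simp add: f_def)
    moreover have "f 0 = t" by (simp add: f_def)
    ultimately show False using s unfolding SN_def by blast
  qed
qed

lemma SN_rel: "SN s \<Longrightarrow> rel z 0 s' s \<Longrightarrow> SN s'"
proof -
  assume "SN s"
  then have "Wellfounded.accp (\<lambda>y x. red1\<^sup>+\<^sup>+ x y) s" using acc_trancl by (simp add: SN_accp)
  then have "\<forall>s'. rel z 0 s' s \<longrightarrow> Wellfounded.accp (\<lambda>y x. red1 x y) s'"
  proof (induction rule: accp_induct_rule)
    case (1 x)
    have "\<forall>s'. zc z 0 s' = n \<longrightarrow> rel z 0 s' x \<longrightarrow> Wellfounded.accp (\<lambda>y x. red1 x y) s'" for n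
    proof (induction n rule: less_induct)
      case (less n)
      show ?case
      proof (intro allI impI)
        fix s' assume zn: "zc z 0 s' = n" and rs: "rel z 0 s' x"
        show "Wellfounded.accp (\<lambda>y x. red1 x y) s'"
        proof (rule accpI)
          fix y' assume st: "red1 s' y'"
          obtain r where r: "P z [] x s' r y'" using sim[OF st] rs by fastforce
          then show "Wellfounded.accp (\<lambda>y x. red1 x y) y'"
            using 1 less zn by auto
        qed
      qed
    qed
    then show ?case by blast
  qed
  then show "rel z 0 s' s \<Longrightarrow> SN s'" by (simp add: SN_accp)
qed

lemma red_rel: "rel z 0 s' s \<Longrightarrow> reducible T s \<Longrightarrow> reducible T s'"
proof (induction T arbitrary: s s')
  case Top then show ?case using SN_rel by simp
next
  case (TVar n) then show ?case using SN_rel by simp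
next
  case (Prod T1 T2)
  have "rel z 0 (P1 s') (P1 s)" "rel z 0 (P2 s') (P2 s)" using Prod.prems(1) by auto
  then show ?case using Prod.IH(1)[of "P1 s'" "P1 s"] Prod.IH(2)[of "P2 s'" "P2 s"] Prod.prems(2) by simp
next
  case (Arr T1 T2)
  show ?case
  proof (simp, intro allI impI)
    fix u assume u: "has_ty [] u T1" "reducible T1 u"
    have r: "rel z 0 (App s' u) (App s u)" using Arr.prems(1) rel_refl by auto
    show "reducible T2 (App s' u)" by (rule Arr.IH(2)[OF r]) (use Arr.prems(2) u in simp)
  qed
qed

theorem mainTheorem8:
  fixes t :: trm and T :: ty and z :: nat
  assumes "has_ty [] t T"
    and "\<not> free_occ z Top 0 t"
  shows "(reducible T t \<longrightarrow> reducible T (repl_star z 0 t))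
     \<and> reds (repl_star z 0 t) t
     \<and> (atomic T \<longrightarrow> SN t \<longrightarrow> SN (repl_star z 0 t))"
proof (intro conjI impI)
  show "reducible T (repl_star z 0 t)" if "reducible T t"
    using red_rel[OF rel_repl that] .
  show "reds (repl_star z 0 t) t" using rel_reds[OF rel_repl] by simp
  show "SN (repl_star z 0 t)" if "SN t" using SN_rel[OF that rel_repl] .
qed

end
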